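(* Let $\lambda_1\ge\lambda_2\ge\lambda_3\ge\lambda_4\ge0$ with $\sum_i\lambda_i=1$, and let $$\rho_{\vec\lambda}=\lambda_1\Phi_1+\lambda_2|01\rangle\langle01|+\lambda_3\Phi_2+\lambda_4|10\rangle\langle10|,\qquad \sigma_{\vec\lambda}=\sum_{j=1}^4\lambda_j\Phi_j.$$ Suppose $\vec\lambda=(\lambda_1,\lambda_2,\lambda_3,\lambda_4)$ lies in one of the regions $A=\{2\lambda_2+\lambda_3-\lambda_1<0,\ 2\lambda_3+\lambda_4-\lambda_2<0\}$, $B=\{2\lambda_2+\lambda_3-\lambda_1<0,\ 2\lambda_3+\lambda_4-\lambda_2\ge0,\ \lambda_3\le2\lambda_4,\ \lambda_2>\lambda_3+\lambda_4\}$, $C=\{2\lambda_2+\lambda_3-\lambda_1<0,\ 2\lambda_3+\lambda_4-\lambda_2\ge0,\ \lambda_3>2\lambda_4,\ \lambda_2>\tfrac32\lambda_3\}$. Then there exists no non-entangling map $\Lambda:\mathcal{D}\to\mathcal{D}$ such that $\Lambda(\rho_{\vec\lambda})=\sigma_{\vec\lambda}$.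
   Context: $\mathcal{D}$ is the set of two-qubit density matrices on $\mathbb{C}^2\otimes\mathbb{C}^2$ (Hermitian, positive semidefinite, trace one $4\times4$ matrices), written in the computational basis $\{|ij\rangle\}_{i,j\in\{0,1\}}$. The Bell vectors are $|\Phi_1\rangle=\frac{1}{\sqrt2}(|00\rangle+|11\rangle)$, $|\Phi_2\rangle=\frac{1}{\sqrt2}(|00\rangle-|11\rangle)$, $|\Phi_3\rangle=\frac{1}{\sqrt2}(|10\rangle+|01\rangle)$, $|\Phi_4\rangle=\frac{1}{\sqrt2}(|10\rangle-|01\rangle)$, and $\Phi_i=|\Phi_i\rangle\langle\Phi_i|$. A state is separable if it is a convex combination of product states $|\phi\rangle\langle\phi|\otimes|\chi\rangle\langle\chi|$. A map $\Lambda:\mathcal{D}\to\mathcal{D}$ is non-entangling (NE) if it is completely positive and trace preserving and maps every separable state to a separable state. *)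

theory Defs
  imports Complex_Main "Jordan_Normal_Form.Matrix"
begin

text \<open>The computational basis vector |ij> of C^2 (x) C^2 has index 2*i+j,
  i.e. |00>,|01>,|10>,|11> are indices 0,1,2,3. Vectors are functions nat => complex,
  only the first n entries being relevant.\<close>

definition mtrace :: "nat \<Rightarrow> complex mat \<Rightarrow> complex" where
  "mtrace n A = (\<Sum>i<n. A $$ (i, i))"

definition psd :: "nat \<Rightarrow> complex mat \<Rightarrow> bool" where
  "psd n A \<longleftrightarrow> A \<in> carrier_mat n n \<and>
     (\<forall>v :: nat \<Rightarrow> complex.
        let q = (\<Sum>i<n. \<Sum>j<n. cnj (v i) * A $$ (i, j) * v j) in Im q = 0 \<and> Re q \<ge> 0)"

text \<open>Hermitian (implied by psd over C, stated for fidelity with the definition of states).\<close>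
definition hermitian :: "nat \<Rightarrow> complex mat \<Rightarrow> bool" where
  "hermitian n A \<longleftrightarrow> A \<in> carrier_mat n n \<and> (\<forall>i<n. \<forall>j<n. A $$ (i, j) = cnj (A $$ (j, i)))"

definition density2 :: "complex mat \<Rightarrow> bool" where
  "density2 \<rho> \<longleftrightarrow> hermitian 4 \<rho> \<and> psd 4 \<rho> \<and> mtrace 4 \<rho> = 1"

definition proj :: "nat \<Rightarrow> (nat \<Rightarrow> complex) \<Rightarrow> complex mat" where
  "proj n v = mat n n (\<lambda>(i, j). v i * cnj (v j))"

definition unit_vec2 :: "(nat \<Rightarrow> complex) \<Rightarrow> bool" where
  "unit_vec2 v \<longleftrightarrow> (\<Sum>i<2. cmod (v i) ^ 2) = 1"

definition tensor2 :: "(nat \<Rightarrow> complex) \<Rightarrow> (nat \<Rightarrow> complex) \<Rightarrow> nat \<Rightarrow> complex" where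
  "tensor2 \<phi> \<chi> = (\<lambda>k. \<phi> (k div 2) * \<chi> (k mod 2))"

text \<open>Separable: finite convex combination of product pure states
  |phi><phi| (x) |chi><chi| = |phi (x) chi><phi (x) chi|.\<close>
definition separable2 :: "complex mat \<Rightarrow> bool" where
  "separable2 \<rho> \<longleftrightarrow> (\<exists>(m::nat) (p :: nat \<Rightarrow> real) \<phi> \<chi>.
      (\<forall>k<m. p k \<ge> 0 \<and> unit_vec2 (\<phi> k) \<and> unit_vec2 (\<chi> k)) \<and> (\<Sum>k<m. p k) = 1 \<and>
      \<rho> = mat 4 4 (\<lambda>(i, j). \<Sum>k<m. complex_of_real (p k) * proj 4 (tensor2 (\<phi> k) (\<chi> k)) $$ (i, j)))"

text \<open>Ampliation id_k (x) Lambda acting on a (4k) x (4k) matrix viewed as a k x k block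
  matrix with 4 x 4 blocks.\<close>
definition block4 :: "complex mat \<Rightarrow> nat \<Rightarrow> nat \<Rightarrow> complex mat" where
  "block4 X a b = mat 4 4 (\<lambda>(i, j). X $$ (4 * a + i, 4 * b + j))"

definition ampl :: "nat \<Rightarrow> (complex mat \<Rightarrow> complex mat) \<Rightarrow> complex mat \<Rightarrow> complex mat" where
  "ampl k \<Lambda> X = mat (4 * k) (4 * k)
     (\<lambda>(r, c). \<Lambda> (block4 X (r div 4) (c div 4)) $$ (r mod 4, c mod 4))"

definition linear_map4 :: "(complex mat \<Rightarrow> complex mat) \<Rightarrow> bool" where
  "linear_map4 \<Lambda> \<longleftrightarrow>
     (\<forall>A \<in> carrier_mat 4 4. \<Lambda> A \<in> carrier_mat 4 4) \<and>
     (\<forall>A \<in> carrier_mat 4 4. \<forall>B \<in> carrier_mat 4 4. \<Lambda> (A + B) = \<Lambda> A + \<Lambda> B) \<and>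
     (\<forall>A \<in> carrier_mat 4 4. \<forall>c :: complex. \<Lambda> (c \<cdot>\<^sub>m A) = c \<cdot>\<^sub>m \<Lambda> A)"

definition completely_positive4 :: "(complex mat \<Rightarrow> complex mat) \<Rightarrow> bool" where
  "completely_positive4 \<Lambda> \<longleftrightarrow> (\<forall>k X. psd (4 * k) X \<longrightarrow> psd (4 * k) (ampl k \<Lambda> X))"

definition trace_preserving4 :: "(complex mat \<Rightarrow> complex mat) \<Rightarrow> bool" where
  "trace_preserving4 \<Lambda> \<longleftrightarrow> (\<forall>A \<in> carrier_mat 4 4. mtrace 4 (\<Lambda> A) = mtrace 4 A)"

definition non_entangling :: "(complex mat \<Rightarrow> complex mat) \<Rightarrow> bool" where
  "non_entangling \<Lambda> \<longleftrightarrow> linear_map4 \<Lambda> \<and> completely_positive4 \<Lambda> \<and> trace_preserving4 \<Lambda> \<and>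
     (\<forall>\<rho>. density2 \<rho> \<longrightarrow> density2 (\<Lambda> \<rho>)) \<and>
     (\<forall>\<rho>. separable2 \<rho> \<longrightarrow> separable2 (\<Lambda> \<rho>))"

definition ket :: "nat \<Rightarrow> nat \<Rightarrow> complex" where
  "ket a = (\<lambda>k. if k = a then 1 else 0)"

definition bell :: "nat \<Rightarrow> nat \<Rightarrow> complex" where
  "bell n = (\<lambda>k. complex_of_real (1 / sqrt 2) *
     (if n = 1 then ket 0 k + ket 3 k
      else if n = 2 then ket 0 k - ket 3 k
      else if n = 3 then ket 2 k + ket 1 k
      else ket 2 k - ket 1 k))"

definition Bell :: "nat \<Rightarrow> complex mat" where
  "Bell n = proj 4 (bell n)"

definition rho_lam :: "real \<Rightarrow> real \<Rightarrow> real \<Rightarrow> real \<Rightarrow> complex mat" where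
  "rho_lam l1 l2 l3 l4 =
     complex_of_real l1 \<cdot>\<^sub>m Bell 1 + complex_of_real l2 \<cdot>\<^sub>m proj 4 (ket 1)
     + complex_of_real l3 \<cdot>\<^sub>m Bell 2 + complex_of_real l4 \<cdot>\<^sub>m proj 4 (ket 2)"

definition sigma_lam :: "real \<Rightarrow> real \<Rightarrow> real \<Rightarrow> real \<Rightarrow> complex mat" where
  "sigma_lam l1 l2 l3 l4 =
     complex_of_real l1 \<cdot>\<^sub>m Bell 1 + complex_of_real l2 \<cdot>\<^sub>m Bell 2
     + complex_of_real l3 \<cdot>\<^sub>m Bell 3 + complex_of_real l4 \<cdot>\<^sub>m Bell 4"

end

theory Submission
  imports Defs
begin


definition bf :: "nat \<Rightarrow> complex mat \<Rightarrow> real" where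
  "bf k A = Re (\<Sum>i<4. \<Sum>j<4. cnj (bell k i) * A $$ (i, j) * bell k j)"

lemma sum4: "(\<Sum>i<4. f i) = f 0 + f 1 + f 2 + f (3::nat)" for f :: "nat \<Rightarrow> 'a::comm_monoid_add"
  by (simp add: eval_nat_numeral add.assoc)

lemma half_sq_r: "(1 / sqrt 2) * (1 / sqrt 2) = (1/2::real)"
  by (simp add: divide_simps)

lemma half_sq: "complex_of_real (1 / sqrt 2) * complex_of_real (1 / sqrt 2) = 1/2"
  by (metis half_sq_r of_real_mult of_real_divide of_real_1 of_real_numeral)

lemma bf1: "bf 1 A = Re (A$$(0,0) + A$$(0,3) + A$$(3,0) + A$$(3,3)) / 2"
  unfolding bf_def sum4 bell_def ket_def
  by (simp add: algebra_simps half_sq)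

lemma bf2: "bf 2 A = Re (A$$(0,0) - A$$(0,3) - A$$(3,0) + A$$(3,3)) / 2"
  unfolding bf_def sum4 bell_def ket_def
  by (simp add: algebra_simps half_sq)

lemma bf3: "bf 3 A = Re (A$$(1,1) + A$$(1,2) + A$$(2,1) + A$$(2,2)) / 2"
  unfolding bf_def sum4 bell_def ket_def
  by (simp add: algebra_simps half_sq)

lemma bf4: "bf 4 A = Re (A$$(1,1) - A$$(1,2) - A$$(2,1) + A$$(2,2)) / 2"
  unfolding bf_def sum4 bell_def ket_def
  by (simp add: algebra_simps half_sq)

lemma bf_add: "A \<in> carrier_mat 4 4 \<Longrightarrow> B \<in> carrier_mat 4 4 \<Longrightarrow> bf k (A + B) = bf k A + bf k B"
  unfolding bf_def sum4 by (simp add: algebra_simps)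

lemma bf_smult: "A \<in> carrier_mat 4 4 \<Longrightarrow> bf k (complex_of_real c \<cdot>\<^sub>m A) = c * bf k A"
  unfolding bf_def sum4 by (simp add: algebra_simps)

lemma cs2: "cmod (a*c + b*d)^2 \<le> (cmod a^2 + cmod b^2) * (cmod c^2 + cmod d^2)"
proof -
  have "cmod (a*c + b*d) \<le> cmod a * cmod c + cmod b * cmod d"
    by (metis norm_mult norm_triangle_ineq)
  hence "cmod (a*c + b*d)^2 \<le> (cmod a * cmod c + cmod b * cmod d)^2"
    by (simp add: power_mono)
  also have "\<dots> \<le> (cmod a^2 + cmod b^2) * (cmod c^2 + cmod d^2)"
  proof -
    have "0 \<le> (cmod a * cmod d - cmod b * cmod c)^2" by simp
    thus ?thesis by (simp add: power2_eq_square algebra_simps)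
  qed
  finally show ?thesis .
qed

lemma re_sq_p: "Re (a*cnj a + a*cnj b + b*cnj a + b*cnj b) = cmod (a+b)^2"
  unfolding cmod_power2 by (simp add: algebra_simps power2_eq_square)

lemma re_sq_m: "Re (a*cnj a - a*cnj b - b*cnj a + b*cnj b) = cmod (a-b)^2"
  unfolding cmod_power2 by (simp add: algebra_simps power2_eq_square)

lemma unit_le: "unit_vec2 f \<Longrightarrow> unit_vec2 g \<Longrightarrow> cmod (f 0 * g 0 + f 1 * g 1)^2 \<le> 1"
  using cs2[of "f 0" "g 0" "f 1" "g 1"] unfolding unit_vec2_def
  by (simp add: numeral_2_eq_2)

lemma unit_le_m: "unit_vec2 f \<Longrightarrow> unit_vec2 g \<Longrightarrow> cmod (f 0 * g 0 - f 1 * g 1)^2 \<le> 1"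
  using cs2[of "f 0" "g 0" "- f 1" "g 1"] unfolding unit_vec2_def
  by (simp add: numeral_2_eq_2)



lemma re_ofr: "Re (complex_of_real r * z) = r * Re z"
  by simp

lemma sum_bound:
  assumes "\<forall>n<m. 0 \<le> p n \<and> g n \<le> 1 \<and> 0 \<le> g n" "(\<Sum>n<(m::nat). p n) = (1::real)"
  shows "0 \<le> (\<Sum>n<m. p n * g n) / 2 \<and> (\<Sum>n<m. p n * g n) / 2 \<le> 1/2"
proof -
  have "(\<Sum>n<m. p n * g n) \<le> (\<Sum>n<m. p n)"
    using assms(1) by (intro sum_mono) (simp add: mult_left_le)
  moreover have "0 \<le> (\<Sum>n<m. p n * g n)"
    using assms(1) by (intro sum_nonneg) simp
  ultimately show ?thesis using assms(2) by simp
qed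

lemma sep_bf_gen:
  assumes "separable2 A" and s: "s = 1 \<or> s = -1"
  shows "0 \<le> Re (A$$(0,0) + s * A$$(0,3) + s * A$$(3,0) + A$$(3,3)) / 2 \<and>
         Re (A$$(0,0) + s * A$$(0,3) + s * A$$(3,0) + A$$(3,3)) / 2 \<le> 1/2"
proof -
  obtain m p \<phi> \<chi> where
    h: "\<forall>k<(m::nat). p k \<ge> 0 \<and> unit_vec2 (\<phi> k) \<and> unit_vec2 (\<chi> k)" and ps: "(\<Sum>k<m. p k) = 1" and
    A: "A = mat 4 4 (\<lambda>(i, j). \<Sum>k<m. complex_of_real (p k) * proj 4 (tensor2 (\<phi> k) (\<chi> k)) $$ (i, j))"
    using assms(1) unfolding separable2_def by blast
  define a where "a = (\<lambda>n. \<phi> n 0 * \<chi> n 0)"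
  define b where "b = (\<lambda>n. s * (\<phi> n 1 * \<chi> n 1))"
  have ent: "A $$ (i, j) = (\<Sum>n<m. complex_of_real (p n) *
       (tensor2 (\<phi> n) (\<chi> n) i * cnj (tensor2 (\<phi> n) (\<chi> n) j)))" if "i < 4" "j < 4" for i j
    using that by (simp add: A proj_def)
  have t0: "tensor2 f g 0 = f 0 * g 0" for f g by (simp add: tensor2_def)
  have t3: "tensor2 f g 3 = f 1 * g 1" for f g by (simp add: tensor2_def)
  have ss: "cnj s = s" "s * (s * x) = x" for x using s by auto
  have "A$$(0,0) + s * A$$(0,3) + s * A$$(3,0) + A$$(3,3) =
     (\<Sum>n<m. complex_of_real (p n) * (a n * cnj (a n) + a n * cnj (b n) + b n * cnj (a n) + b n * cnj (b n)))"
    unfolding ent[of 0 0, simplified] ent[of 0 3, simplified] ent[of 3 0, simplified] ent[of 3 3, simplified]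
      t0 t3 a_def b_def
    by (simp add: sum.distrib[symmetric] sum_distrib_left algebra_simps ss)
  hence "Re (A$$(0,0) + s * A$$(0,3) + s * A$$(3,0) + A$$(3,3)) = (\<Sum>n<m. p n * cmod (a n + b n)^2)"
    by (simp only: Re_sum re_ofr re_sq_p)
  moreover have "cmod (a n + b n)^2 \<le> 1" if "n < m" for n
  proof (cases "s = 1")
    case True
    then show ?thesis using unit_le[of "\<phi> n" "\<chi> n"] h that by (simp add: a_def b_def)
  next
    case False
    hence "s = -1" using s by simp
    then show ?thesis using unit_le_m[of "\<phi> n" "\<chi> n"] h that by (simp add: a_def b_def)
  qed
  ultimately show ?thesis using sum_bound[of m p "\<lambda>n. cmod (a n + b n)^2"] h ps by simp
qed

lemma sep_bf1: "separable2 A \<Longrightarrow> 0 \<le> bf 1 A \<and> bf 1 A \<le> 1/2"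
  using sep_bf_gen[of A 1] unfolding bf1 by simp

lemma sep_bf2: "separable2 A \<Longrightarrow> 0 \<le> bf 2 A \<and> bf 2 A \<le> 1/2"
  using sep_bf_gen[of A "-1"] unfolding bf2 by simp



lemma psd_proj: "psd n (proj n v)"
proof -
  have "(\<Sum>i<n. \<Sum>j<n. cnj (w i) * proj n v $$ (i, j) * w j) =
        (\<Sum>i<n. cnj (w i) * v i) * cnj (\<Sum>j<n. cnj (w j) * v j)" for w
    by (simp add: proj_def sum_product algebra_simps)
  also have "\<dots> w = complex_of_real (cmod (\<Sum>i<n. cnj (w i) * v i) ^ 2)" for w
    by (rule complex_norm_square[symmetric])
  finally have q: "(\<Sum>i<n. \<Sum>j<n. cnj (w i) * proj n v $$ (i, j) * w j) = complex_of_real (cmod (\<Sum>i<n. cnj (w i) * v i) ^ 2)" for w .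
  show ?thesis unfolding psd_def Let_def q by (simp add: proj_def)
qed

lemma herm_proj: "hermitian n (proj n v)"
  unfolding hermitian_def proj_def by simp

lemma less4: "i < 4 \<Longrightarrow> i = 0 \<or> i = 1 \<or> i = 2 \<or> i = (3::nat)"
  by auto

lemma sq2c: "complex_of_real (sqrt 2) * complex_of_real (sqrt 2) = 2"
  by (simp flip: of_real_mult)

lemma density_Bell1: "density2 (Bell 1)"
proof -
  have tr: "mtrace 4 (Bell 1) = 1" unfolding mtrace_def Bell_def sum4
    by (simp add: proj_def bell_def ket_def half_sq sq2c)
  show ?thesis
    unfolding density2_def using herm_proj[of 4 "bell 1"] psd_proj[of 4 "bell 1"] tr unfolding Bell_def by blast
qed

lemma sep_pure: "unit_vec2 f \<Longrightarrow> unit_vec2 g \<Longrightarrow> separable2 (proj 4 (tensor2 f g))"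
  unfolding separable2_def
  apply (rule exI[of _ 1], rule exI[of _ "\<lambda>_. 1"], rule exI[of _ "\<lambda>_. f"], rule exI[of _ "\<lambda>_. g"])
  apply (intro conjI)
    apply simp_all
  apply (rule eq_matI)
  by (simp_all add: proj_def)

lemma unit_ket: "unit_vec2 (ket 0)" "unit_vec2 (ket 1)"
  by (auto simp: unit_vec2_def ket_def numeral_2_eq_2)

lemma sep_P01: "separable2 (proj 4 (ket 1))"
proof -
  have a: "(k div 2 = 0 \<and> k mod 2 = 1) = (k = 1)" for k :: nat by presburger
  have h: "tensor2 (ket 0) (ket 1) = ket 1"
    by (auto simp add: tensor2_def ket_def fun_eq_iff a)
  show ?thesis using sep_pure[OF unit_ket(1) unit_ket(2)] unfolding h .
qed

lemma sep_P10: "separable2 (proj 4 (ket 2))"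
proof -
  have a: "(k div 2 = 1 \<and> k mod 2 = 0) = (k = 2)" for k :: nat by presburger
  have h: "tensor2 (ket 1) (ket 0) = ket 2"
    by (auto simp add: tensor2_def ket_def fun_eq_iff a)
  show ?thesis using sep_pure[OF unit_ket(2) unit_ket(1)] unfolding h .
qed




lemma sum2: "(\<Sum>i<2. f i) = f 0 + f (1::nat)" for f :: "nat \<Rightarrow> 'a::comm_monoid_add"
  by (simp add: eval_nat_numeral)

lemma sep_Q: "separable2 (complex_of_real (1/2) \<cdot>\<^sub>m Bell 1 + complex_of_real (1/2) \<cdot>\<^sub>m Bell 2)"
  unfolding separable2_def
  apply (rule exI[of _ 2], rule exI[of _ "\<lambda>_. 1/2"], rule exI[of _ "\<lambda>n. ket n"], rule exI[of _ "\<lambda>n. ket n"])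
  apply (intro conjI)
    apply (simp add: unit_vec2_def ket_def sum2)
   apply (simp add: sum2)
  apply (rule eq_matI)
  subgoal for i j
    apply (simp add: sum2)
    apply (drule less4)+
    apply (elim disjE)
    by (simp_all add: Bell_def proj_def bell_def ket_def tensor2_def half_sq sq2c)
  by (simp_all add: Bell_def proj_def)

definition ph :: "nat \<Rightarrow> complex" where
  "ph n = (if n = 0 then 1 else if n = 1 then \<i> else if n = 2 then -1 else -\<i>)"

definition cc :: complex where "cc = complex_of_real (1 / sqrt 2)"

lemma cc_sq: "cc * cc = 1/2" "cnj cc = cc" "cmod cc ^ 2 = 1/2"
proof -
  show "cc * cc = 1/2" "cnj cc = cc" unfolding cc_def using half_sq by simp_all
  show "cmod cc ^ 2 = 1/2" unfolding cc_def norm_of_real by (simp add: power_divide)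
qed

lemma unit_t: "cmod t = 1 \<Longrightarrow> unit_vec2 (\<lambda>i. if i = 0 then cc else if i = 1 then cc * t else 0)"
  using cc_sq unfolding unit_vec2_def by (simp add: sum2 norm_mult power_mult_distrib)

lemma ph_norm: "cmod (ph n) = 1" "ph n * cnj (ph n) = 1"
  unfolding ph_def by auto

lemma cc_mul: "cc * (cc * x) = x / 2"
  using cc_sq(1) by (metis mult.assoc times_divide_eq_left mult_1)

lemma ph_mul: "ph n * (cnj (ph n) * x) = x"
  using ph_norm(2) by (metis mult.assoc mult_1)

definition phiR :: "nat \<Rightarrow> nat \<Rightarrow> complex" where
  "phiR n = (\<lambda>i. if i = 0 then cc else if i = 1 then cc * ph n else 0)"
definition chiR :: "complex \<Rightarrow> nat \<Rightarrow> nat \<Rightarrow> complex" where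
  "chiR s n = (\<lambda>i. if i = 0 then cc else if i = 1 then cc * (s * cnj (ph n)) else 0)"


lemma t2: "(cc * p) * cc = p / 2"
proof -
  have "(cc * p) * cc = (cc * cc) * p" by (simp only: ac_simps)
  thus ?thesis using cc_sq(1) by simp
qed
lemma t3: "(cc * p) * (cc * (s * cnj p)) = (cc * cc) * (p * cnj p) * s" by (simp only: ac_simps)
lemma t1: "cc * (cc * x) = (cc * cc) * x" by (simp only: ac_simps)
lemma tv:
  assumes "k < 4"
  shows "tensor2 (phiR n) (chiR s n) k = (if k = 0 then 1/2 else if k = 1 then s * cnj (ph n) / 2
           else if k = 2 then ph n / 2 else s / 2)"
proof -
  have e: "tensor2 (phiR n) (chiR s n) k = phiR n (k div 2) * chiR s n (k mod 2)" by (simp add: tensor2_def)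
  show ?thesis using less4[OF assms]
  proof (elim disjE)
    assume "k = 0" thus ?thesis unfolding e by (simp add: phiR_def chiR_def cc_sq)
  next
    assume "k = 1" thus ?thesis unfolding e by (simp add: phiR_def chiR_def t1 cc_sq)
  next
    assume "k = 2" thus ?thesis unfolding e by (simp add: phiR_def chiR_def t2)
  next
    assume "k = 3" thus ?thesis unfolding e by (simp add: phiR_def chiR_def t3 cc_sq ph_norm)
  qed
qed

lemma bell1v: "bell (Suc 0) i = (if i = 0 \<or> i = 3 then cc else 0)"
  by (simp add: bell_def ket_def cc_def)
lemma bell2v: "bell 2 i = (if i = 0 then cc else if i = 3 then - cc else 0)"
  by (simp add: bell_def ket_def cc_def)

definition MR :: "complex \<Rightarrow> complex mat" where
  "MR s = complex_of_real (1/2) \<cdot>\<^sub>m Bell (if s = 1 then 1 else 2)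
     + complex_of_real (1/4) \<cdot>\<^sub>m proj 4 (ket 1) + complex_of_real (1/4) \<cdot>\<^sub>m proj 4 (ket 2)"

lemma MR_ent:
  assumes "i < 4" "j < 4" "(s::complex) = 1 \<or> s = -1"
  shows "MR s $$ (i, j) = (if i = j then 1/4 else if (i = 0 \<and> j = 3) \<or> (i = 3 \<and> j = 0) then s/4 else 0)"
proof -
  have "MR s $$ (i, j) = complex_of_real (1/2) * (bell (if s = 1 then 1 else 2) i * cnj (bell (if s = 1 then 1 else 2) j))
     + complex_of_real (1/4) * (ket 1 i * cnj (ket 1 j)) + complex_of_real (1/4) * (ket 2 i * cnj (ket 2 j))"
    using assms(1,2) by (simp add: MR_def Bell_def proj_def)
  thus ?thesis using less4[OF assms(1)] less4[OF assms(2)] assms(3)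
    apply (elim disjE)
    by (simp_all add: bell1v bell2v ket_def cc_sq)
qed

lemma RHS_ent:
  assumes "i < 4" "j < 4" "(s::complex) = 1 \<or> s = -1"
  shows "(\<Sum>k<4. complex_of_real (1/4) * (tensor2 (phiR k) (chiR s k) i * cnj (tensor2 (phiR k) (chiR s k) j)))
     = (if i = j then 1/4 else if (i = 0 \<and> j = 3) \<or> (i = 3 \<and> j = 0) then s/4 else 0)"
  unfolding sum4 tv[OF assms(1)] tv[OF assms(2)]
  using less4[OF assms(1)] less4[OF assms(2)] assms(3)
  apply (elim disjE)
  by (simp_all add: ph_def)

lemma sep_R:
  assumes "(s::complex) = 1 \<or> s = -1"
  shows "separable2 (MR s)"
proof -
  have u: "\<forall>k<(4::nat). 0 \<le> (1/4::real) \<and> unit_vec2 (phiR k) \<and> unit_vec2 (chiR s k)"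
  proof (intro allI impI conjI)
    fix k :: nat
    show "unit_vec2 (phiR k)" unfolding phiR_def by (rule unit_t) (simp add: ph_norm)
    have "cmod (s * cnj (ph k)) = 1" using assms by (auto simp: norm_mult ph_norm)
    thus "unit_vec2 (chiR s k)" unfolding chiR_def by (rule unit_t)
  qed simp
  have ps: "(\<Sum>k<(4::nat). (1/4::real)) = 1" by simp
  have m: "MR s = mat 4 4 (\<lambda>(i, j). \<Sum>k<4. complex_of_real (1/4) * proj 4 (tensor2 (phiR k) (chiR s k)) $$ (i, j))"
  proof (rule eq_matI)
    fix i j assume "i < dim_row (mat 4 4 (\<lambda>(i, j). \<Sum>k<4. complex_of_real (1/4) * proj 4 (tensor2 (phiR k) (chiR s k)) $$ (i, j)))"
       "j < dim_col (mat 4 4 (\<lambda>(i, j). \<Sum>k<4. complex_of_real (1/4) * proj 4 (tensor2 (phiR k) (chiR s k)) $$ (i, j)))"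
    hence i4: "i < 4" and j4: "j < 4" by auto
    have r: "mat 4 4 (\<lambda>(i, j). \<Sum>k<4. complex_of_real (1/4) * proj 4 (tensor2 (phiR k) (chiR s k)) $$ (i, j)) $$ (i, j)
       = (\<Sum>k<4. complex_of_real (1/4) * (tensor2 (phiR k) (chiR s k) i * cnj (tensor2 (phiR k) (chiR s k) j)))"
      using i4 j4 by (simp add: proj_def)
    show "MR s $$ (i, j) = mat 4 4 (\<lambda>(i, j). \<Sum>k<4. complex_of_real (1/4) * proj 4 (tensor2 (phiR k) (chiR s k)) $$ (i, j)) $$ (i, j)"
      unfolding r RHS_ent[OF i4 j4 assms] MR_ent[OF i4 j4 assms] by (rule refl)
  qed (simp_all add: MR_def Bell_def proj_def)
  show ?thesis unfolding separable2_def
    apply (rule exI[of _ 4], rule exI[of _ "\<lambda>_. 1/4"], rule exI[of _ phiR], rule exI[of _ "chiR s"])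
    using u ps m by (intro conjI) assumption+
qed


lemma arith_core:
  fixes l1 l2 l3 l4 x1 x2 x3 x4 y1 y2 u1 u2 v1 v2 :: real
  assumes "l1 \<ge> l2" "l2 \<ge> l3" "l3 \<ge> l4" "l4 \<ge> 0"
    and reg: "(2*l2 + l3 - l1 < 0 \<and> 2*l3 + l4 - l2 < 0)
       \<or> (2*l2 + l3 - l1 < 0 \<and> 2*l3 + l4 - l2 \<ge> 0 \<and> l3 \<le> 2*l4 \<and> l2 > l3 + l4)
       \<or> (2*l2 + l3 - l1 < 0 \<and> 2*l3 + l4 - l2 \<ge> 0 \<and> l3 > 2*l4 \<and> l2 > 3/2 * l3)"
    and E1: "l1 = l1*x1 + l2*u1 + l3*y1 + l4*v1"
    and E2: "l2 = l1*x2 + l2*u2 + l3*y2 + l4*v2"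
    and X: "x2 \<ge> 0" "x3 \<ge> 0" "x4 \<ge> 0" "x1 + x2 + x3 + x4 = 1"
    and U: "u1 \<ge> 0" "v1 \<ge> 0" "u2 \<ge> 0" "u2 \<le> 1/2" "v2 \<ge> 0" "v2 \<le> 1/2"
    and Q: "x1/2 + y1/2 \<le> 1/2"
    and R1: "x1/2 + u1/4 + v1/4 \<le> 1/2"
    and R2: "y2/2 + u2/4 + v2/4 \<le> 1/2"
  shows False
proof -
  have d: "l1 - l3 - 2*l2 > 0" using reg by auto
  have a: "l3*y1 \<le> l3*(1-x1)" using Q assms(2-4) by (intro mult_left_mono) auto
  have b: "l4*v1 \<le> l2*v1" using U assms by (intro mult_right_mono) auto
  have c: "l2*(u1+v1) \<le> l2*(2*(1-x1))" using R1 assms by (intro mult_left_mono) auto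
  have "(l1 - l3 - 2*l2) * (1-x1) \<le> 0" using E1 a b c by (simp add: algebra_simps)
  hence "1 - x1 \<le> 0" using d by (simp add: mult_le_0_iff)
  hence x1: "x1 = 1" using R1 U by linarith
  hence x2: "x2 = 0" using X by linarith
  have E2': "l2 = l2*u2 + l3*y2 + l4*v2" using E2 x2 by simp
  have y2: "y2 \<le> 1 - (u2+v2)/2" using R2 by (simp add: field_simps)
  have l3: "l3 \<ge> 0" using assms by linarith
  have p1: "l2*u2 \<le> l2/2" using mult_left_mono[OF U(4), of l2] assms by simp
  have p2: "l3*y2 + l3*u2/2 + l3*v2/2 \<le> l3"
    using mult_left_mono[OF y2 l3] by (simp add: algebra_simps add_divide_distrib)
  have p3: "l4*v2 \<le> l4/2" using mult_left_mono[OF U(6), of l4] assms by simp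
  have n1: "l3*u2 \<ge> 0" "l3*v2 \<ge> 0" using U l3 by simp_all
  show False
  proof (cases "2*l3 + l4 - l2 < 0")
    case True
    then show ?thesis using E2' p1 p2 p3 n1 by linarith
  next
    case False
    show ?thesis
    proof (cases "l3 \<le> 2*l4")
      case True
      have q1: "u2*(l2 - l3/2) \<le> (1/2)*(l2 - l3/2)" using U assms by (intro mult_right_mono) auto
      have q2: "v2*(l4 - l3/2) \<le> (1/2)*(l4 - l3/2)" using U True by (intro mult_right_mono) auto
      have q1': "l2*u2 - l3*u2/2 \<le> l2/2 - l3/4" using q1 by (simp add: algebra_simps)
      have q2': "l4*v2 - l3*v2/2 \<le> l4/2 - l3/4" using q2 by (simp add: algebra_simps)
      show ?thesis using reg False True E2' p2 q1' q2' by linarith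
    next
      case F2: False
      have q1: "u2*(l2 - l3/2) \<le> (1/2)*(l2 - l3/2)" using U assms by (intro mult_right_mono) auto
      have q2: "v2*(l4 - l3/2) \<le> 0" using U F2 by (intro mult_nonneg_nonpos) auto
      have q1': "l2*u2 - l3*u2/2 \<le> l2/2 - l3/4" using q1 by (simp add: algebra_simps)
      have q2': "l4*v2 - l3*v2/2 \<le> 0" using q2 by (simp add: algebra_simps)
      show ?thesis using reg False F2 E2' p2 q1' q2' by linarith
    qed
  qed
qed

lemma linLA: "linear_map4 L \<Longrightarrow> A \<in> carrier_mat 4 4 \<Longrightarrow> B \<in> carrier_mat 4 4 \<Longrightarrow> L (A + B) = L A + L B"
  unfolding linear_map4_def by blast

lemma linLS: "linear_map4 L \<Longrightarrow> A \<in> carrier_mat 4 4 \<Longrightarrow> L (c \<cdot>\<^sub>m A) = c \<cdot>\<^sub>m L A"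
  unfolding linear_map4_def by blast

lemma lin2a:
  assumes "linear_map4 L" "A \<in> carrier_mat 4 4" "B \<in> carrier_mat 4 4"
  shows "L (a \<cdot>\<^sub>m A + b \<cdot>\<^sub>m B) = L (a \<cdot>\<^sub>m A) + L (b \<cdot>\<^sub>m B)"
  using assms(1) smult_carrier_mat[OF assms(2)] smult_carrier_mat[OF assms(3)] by (rule linLA)

lemma lin2:
  assumes "linear_map4 L" "A \<in> carrier_mat 4 4" "B \<in> carrier_mat 4 4"
  shows "L (a \<cdot>\<^sub>m A + b \<cdot>\<^sub>m B) = a \<cdot>\<^sub>m L A + b \<cdot>\<^sub>m L B"
  unfolding lin2a[OF assms] linLS[OF assms(1) assms(2)] linLS[OF assms(1) assms(3)] ..

lemma lin3:
  assumes "linear_map4 L" "A \<in> carrier_mat 4 4" "B \<in> carrier_mat 4 4" "C \<in> carrier_mat 4 4"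
  shows "L (a \<cdot>\<^sub>m A + b \<cdot>\<^sub>m B + c \<cdot>\<^sub>m C) = a \<cdot>\<^sub>m L A + b \<cdot>\<^sub>m L B + c \<cdot>\<^sub>m L C"
proof -
  have ab: "a \<cdot>\<^sub>m A + b \<cdot>\<^sub>m B \<in> carrier_mat 4 4"
    using assms(2,3) by simp
  have e: "L (a \<cdot>\<^sub>m A + b \<cdot>\<^sub>m B + c \<cdot>\<^sub>m C) = L (a \<cdot>\<^sub>m A + b \<cdot>\<^sub>m B) + L (c \<cdot>\<^sub>m C)"
    using assms(1) ab smult_carrier_mat[OF assms(4)] by (rule linLA)
  show ?thesis by (simp only: e lin2[OF assms(1-3)] linLS[OF assms(1) assms(4)])
qed

lemma lin4:
  assumes "linear_map4 L" "A \<in> carrier_mat 4 4" "B \<in> carrier_mat 4 4" "C \<in> carrier_mat 4 4" "D \<in> carrier_mat 4 4"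
  shows "L (a \<cdot>\<^sub>m A + b \<cdot>\<^sub>m B + c \<cdot>\<^sub>m C + d \<cdot>\<^sub>m D) = a \<cdot>\<^sub>m L A + b \<cdot>\<^sub>m L B + c \<cdot>\<^sub>m L C + d \<cdot>\<^sub>m L D"
proof -
  have ab: "a \<cdot>\<^sub>m A + b \<cdot>\<^sub>m B \<in> carrier_mat 4 4"
    using assms(2,3) by simp
  have abc: "a \<cdot>\<^sub>m A + b \<cdot>\<^sub>m B + c \<cdot>\<^sub>m C \<in> carrier_mat 4 4"
    using ab assms(4) by simp
  have e: "L (a \<cdot>\<^sub>m A + b \<cdot>\<^sub>m B + c \<cdot>\<^sub>m C + d \<cdot>\<^sub>m D) = L (a \<cdot>\<^sub>m A + b \<cdot>\<^sub>m B + c \<cdot>\<^sub>m C) + L (d \<cdot>\<^sub>m D)"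
    using assms(1) abc smult_carrier_mat[OF assms(5)] by (rule linLA)
  show ?thesis by (simp only: e lin3[OF assms(1-4)] linLS[OF assms(1) assms(5)])
qed

lemma cB: "Bell n \<in> carrier_mat 4 4" "proj 4 v \<in> carrier_mat 4 4"
  by (simp_all add: Bell_def proj_def)

lemma bf_lin2:
  assumes "A \<in> carrier_mat 4 4" "B \<in> carrier_mat 4 4"
  shows "bf k (complex_of_real a \<cdot>\<^sub>m A + complex_of_real b \<cdot>\<^sub>m B) = a * bf k A + b * bf k B"
  unfolding bf_add[OF smult_carrier_mat[OF assms(1)] smult_carrier_mat[OF assms(2)]] bf_smult[OF assms(1)] bf_smult[OF assms(2)] ..

lemma bf_lin3:
  assumes "A \<in> carrier_mat 4 4" "B \<in> carrier_mat 4 4" "C \<in> carrier_mat 4 4"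
  shows "bf k (complex_of_real a \<cdot>\<^sub>m A + complex_of_real b \<cdot>\<^sub>m B + complex_of_real c \<cdot>\<^sub>m C)
     = a * bf k A + b * bf k B + c * bf k C"
proof -
  have ab: "complex_of_real a \<cdot>\<^sub>m A + complex_of_real b \<cdot>\<^sub>m B \<in> carrier_mat 4 4"
    using assms(1,2) by simp
  show ?thesis unfolding bf_add[OF ab smult_carrier_mat[OF assms(3)]] bf_lin2[OF assms(1,2)] bf_smult[OF assms(3)] ..
qed

lemma bf_lin4:
  assumes "A \<in> carrier_mat 4 4" "B \<in> carrier_mat 4 4" "C \<in> carrier_mat 4 4" "D \<in> carrier_mat 4 4"
  shows "bf k (complex_of_real a \<cdot>\<^sub>m A + complex_of_real b \<cdot>\<^sub>m B + complex_of_real c \<cdot>\<^sub>m C + complex_of_real d \<cdot>\<^sub>m D)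
     = a * bf k A + b * bf k B + c * bf k C + d * bf k D"
proof -
  have ab: "complex_of_real a \<cdot>\<^sub>m A + complex_of_real b \<cdot>\<^sub>m B \<in> carrier_mat 4 4"
    using assms(1,2) by simp
  have abc: "complex_of_real a \<cdot>\<^sub>m A + complex_of_real b \<cdot>\<^sub>m B + complex_of_real c \<cdot>\<^sub>m C \<in> carrier_mat 4 4"
    using ab assms(3) by simp
  show ?thesis unfolding bf_add[OF abc smult_carrier_mat[OF assms(4)]] bf_lin3[OF assms(1-3)] bf_smult[OF assms(4)] ..
qed


lemma psd_bf: "psd 4 A \<Longrightarrow> bf k A \<ge> 0"
  unfolding psd_def bf_def Let_def by blast

lemma bf_sum: "bf 1 A + bf 2 A + bf 3 A + bf 4 A = Re (mtrace 4 A)"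
  unfolding bf1 bf2 bf3 bf4 mtrace_def sum4 by (simp add: field_simps)



lemma bfB: "bf 1 (Bell 1) = 1" "bf 1 (Bell 2) = 0" "bf 1 (Bell 3) = 0" "bf 1 (Bell 4) = 0"
  "bf 2 (Bell 1) = 0" "bf 2 (Bell 2) = 1" "bf 2 (Bell 3) = 0" "bf 2 (Bell 4) = 0"
  unfolding bf1 bf2 by (simp_all add: Bell_def proj_def bell_def ket_def half_sq sq2c)




theorem theorem6:
  fixes l1 l2 l3 l4 :: real
  assumes "l1 \<ge> l2" "l2 \<ge> l3" "l3 \<ge> l4" "l4 \<ge> 0" "l1 + l2 + l3 + l4 = 1"
    and "(2*l2 + l3 - l1 < 0 \<and> 2*l3 + l4 - l2 < 0)
       \<or> (2*l2 + l3 - l1 < 0 \<and> 2*l3 + l4 - l2 \<ge> 0 \<and> l3 \<le> 2*l4 \<and> l2 > l3 + l4)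
       \<or> (2*l2 + l3 - l1 < 0 \<and> 2*l3 + l4 - l2 \<ge> 0 \<and> l3 > 2*l4 \<and> l2 > 3/2 * l3)"
  shows "\<not> (\<exists>\<Lambda>. non_entangling \<Lambda> \<and> \<Lambda> (rho_lam l1 l2 l3 l4) = sigma_lam l1 l2 l3 l4)"
proof
  assume "\<exists>\<Lambda>. non_entangling \<Lambda> \<and> \<Lambda> (rho_lam l1 l2 l3 l4) = sigma_lam l1 l2 l3 l4"
  then obtain L where ne: "non_entangling L" and eq: "L (rho_lam l1 l2 l3 l4) = sigma_lam l1 l2 l3 l4"
    by blast
  have lin: "linear_map4 L" using ne unfolding non_entangling_def by blast
  have dens: "\<And>r. density2 r \<Longrightarrow> density2 (L r)" using ne unfolding non_entangling_def by blast
  have sep: "\<And>r. separable2 r \<Longrightarrow> separable2 (L r)" using ne unfolding non_entangling_def by blast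
  have LC: "\<And>A. A \<in> carrier_mat 4 4 \<Longrightarrow> L A \<in> carrier_mat 4 4" using lin unfolding linear_map4_def by blast
  define B1 where "B1 = Bell 1"
  define B2 where "B2 = Bell 2"
  define P1 where "P1 = proj 4 (ket 1)"
  define P2 where "P2 = proj 4 (ket 2)"
  have cB1: "B1 \<in> carrier_mat 4 4" and cB2: "B2 \<in> carrier_mat 4 4"
    and cP1: "P1 \<in> carrier_mat 4 4" and cP2: "P2 \<in> carrier_mat 4 4"
    unfolding B1_def B2_def P1_def P2_def by (simp_all add: cB)
  have cLB1: "L B1 \<in> carrier_mat 4 4" using LC cB1 .
  have cLB2: "L B2 \<in> carrier_mat 4 4" using LC cB2 .
  have cLP1: "L P1 \<in> carrier_mat 4 4" using LC cP1 .
  have cLP2: "L P2 \<in> carrier_mat 4 4" using LC cP2 .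
  define x1 where "x1 = bf 1 (L B1)"
  define x2 where "x2 = bf 2 (L B1)"
  define x3 where "x3 = bf 3 (L B1)"
  define x4 where "x4 = bf 4 (L B1)"
  define y1 where "y1 = bf 1 (L B2)"
  define y2 where "y2 = bf 2 (L B2)"
  define u1 where "u1 = bf 1 (L P1)"
  define u2 where "u2 = bf 2 (L P1)"
  define v1 where "v1 = bf 1 (L P2)"
  define v2 where "v2 = bf 2 (L P2)"
  have rho: "rho_lam l1 l2 l3 l4 = complex_of_real l1 \<cdot>\<^sub>m B1 + complex_of_real l2 \<cdot>\<^sub>m P1
      + complex_of_real l3 \<cdot>\<^sub>m B2 + complex_of_real l4 \<cdot>\<^sub>m P2"
    unfolding rho_lam_def B1_def B2_def P1_def P2_def ..
  have Lrho: "L (rho_lam l1 l2 l3 l4) = complex_of_real l1 \<cdot>\<^sub>m L B1 + complex_of_real l2 \<cdot>\<^sub>m L P1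
      + complex_of_real l3 \<cdot>\<^sub>m L B2 + complex_of_real l4 \<cdot>\<^sub>m L P2"
    unfolding rho by (rule lin4[OF lin cB1 cP1 cB2 cP2])
  have sig1: "bf 1 (sigma_lam l1 l2 l3 l4) = l1"
    unfolding sigma_lam_def bf_lin4[OF cB(1) cB(1) cB(1) cB(1)] bfB by simp
  have sig2: "bf 2 (sigma_lam l1 l2 l3 l4) = l2"
    unfolding sigma_lam_def bf_lin4[OF cB(1) cB(1) cB(1) cB(1)] bfB by simp
  have E1: "l1 = l1*x1 + l2*u1 + l3*y1 + l4*v1"
    using sig1 unfolding eq[symmetric] Lrho bf_lin4[OF cLB1 cLP1 cLB2 cLP2] x1_def u1_def y1_def v1_def by simp
  have E2: "l2 = l1*x2 + l2*u2 + l3*y2 + l4*v2"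
    using sig2 unfolding eq[symmetric] Lrho bf_lin4[OF cLB1 cLP1 cLB2 cLP2] x2_def u2_def y2_def v2_def by simp
  have dB1: "density2 (L B1)" using dens density_Bell1 unfolding B1_def by blast
  have psdB1: "psd 4 (L B1)" using dB1 unfolding density2_def by blast
  have X: "x2 \<ge> 0" "x3 \<ge> 0" "x4 \<ge> 0" unfolding x2_def x3_def x4_def using psd_bf[OF psdB1] by auto
  have Xs: "x1 + x2 + x3 + x4 = 1"
    using bf_sum[of "L B1"] dB1 unfolding density2_def x1_def x2_def x3_def x4_def by simp
  have sP1: "separable2 (L P1)" using sep sep_P01 unfolding P1_def by blast
  have sP2: "separable2 (L P2)" using sep sep_P10 unfolding P2_def by blast
  have U: "u1 \<ge> 0" "v1 \<ge> 0" "u2 \<ge> 0" "u2 \<le> 1/2" "v2 \<ge> 0" "v2 \<le> 1/2"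
    unfolding u1_def v1_def u2_def v2_def using sep_bf1[OF sP1] sep_bf1[OF sP2] sep_bf2[OF sP1] sep_bf2[OF sP2]
    by auto
  have sQ: "separable2 (L (complex_of_real (1/2) \<cdot>\<^sub>m B1 + complex_of_real (1/2) \<cdot>\<^sub>m B2))"
    using sep sep_Q unfolding B1_def B2_def by blast
  have Q: "x1/2 + y1/2 \<le> 1/2"
    using sep_bf1[OF sQ] unfolding lin2[OF lin cB1 cB2] bf_lin2[OF cLB1 cLB2] x1_def y1_def by simp
  have MR1: "MR 1 = complex_of_real (1/2) \<cdot>\<^sub>m B1 + complex_of_real (1/4) \<cdot>\<^sub>m P1 + complex_of_real (1/4) \<cdot>\<^sub>m P2"
    unfolding MR_def B1_def P1_def P2_def by simp
  have MR2: "MR (-1) = complex_of_real (1/2) \<cdot>\<^sub>m B2 + complex_of_real (1/4) \<cdot>\<^sub>m P1 + complex_of_real (1/4) \<cdot>\<^sub>m P2"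
    unfolding MR_def B2_def P1_def P2_def by simp
  have sR1: "separable2 (L (MR 1))" using sep sep_R[of 1] by simp
  have sR2: "separable2 (L (MR (-1)))" using sep sep_R[of "-1"] by simp
  have R1: "x1/2 + u1/4 + v1/4 \<le> 1/2"
    using sep_bf1[OF sR1] unfolding MR1 lin3[OF lin cB1 cP1 cP2] bf_lin3[OF cLB1 cLP1 cLP2] x1_def u1_def v1_def
    by simp
  have R2: "y2/2 + u2/4 + v2/4 \<le> 1/2"
    using sep_bf2[OF sR2] unfolding MR2 lin3[OF lin cB2 cP1 cP2] bf_lin3[OF cLB2 cLP1 cLP2] y2_def u2_def v2_def
    by simp
  show False
    using arith_core[OF assms(1-4) assms(6) E1 E2 X Xs U Q R1 R2] .
qed
end
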